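(* Let $K$ and $L$ be fields, let $\overline{L}$ be an algebraic closure of $L$, and let $q\colon K\to L$ be a multiplicative quadratic map. Then there exist field monomorphisms $\varphi_1,\varphi_2\colon K\to\overline{L}$ such that $q(a)=\varphi_1(a)\,\varphi_2(a)$ for all $a\in K$.
   Context: Let $K,L$ be rings with identity. A map $q\colon K\to L$ is called a multiplicative quadratic map if (i) $q(ab)=q(a)q(b)$ for all $a,b\in K$; (ii) $q(n\cdot 1_K)=n^2\cdot 1_L$ for all $n\in\mathbb{Z}$; (iii) the map $f\colon K\times K\to L$, $f(a,b)=q(a+b)-q(a)-q(b)$, is biadditive. *)

theory Defs
  imports "HOL-Algebra.Algebraic_Closure_Type"
begin

definition mult_quadratic_map :: "('k::ring_1 \<Rightarrow> 'l::ring_1) \<Rightarrow> bool" where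
  "mult_quadratic_map q \<longleftrightarrow>
     (\<forall>a b. q (a * b) = q a * q b) \<and>
     (\<forall>n::int. q (of_int n) = of_int (n ^ 2)) \<and>
     (let f = (\<lambda>a b. q (a + b) - q a - q b) in
        (\<forall>a b c. f (a + b) c = f a c + f b c) \<and>
        (\<forall>a b c. f a (b + c) = f a b + f a c))"

definition field_monomorphism :: "('k::field \<Rightarrow> 'l::field) \<Rightarrow> bool" where
  "field_monomorphism \<phi> \<longleftrightarrow>
     (\<forall>a b. \<phi> (a + b) = \<phi> a + \<phi> b) \<and>
     (\<forall>a b. \<phi> (a * b) = \<phi> a * \<phi> b) \<and>
     \<phi> 1 = 1 \<and> inj \<phi>"

end

theory Submission
  imports Defs
begin


definition fq :: "('k::ring_1 \<Rightarrow> 'l::ring_1) \<Rightarrow> 'k \<Rightarrow> 'k \<Rightarrow> 'l" where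
  "fq q a b = q (a + b) - q a - q b"

context
  fixes q :: "'k::field \<Rightarrow> 'm::field"
  assumes mq: "mult_quadratic_map q"
begin

lemma qmult: "q (a * b) = q a * q b"
  using mq unfolding mult_quadratic_map_def by blast

lemma qint: "q (of_int n) = of_int (n ^ 2)"
  using mq unfolding mult_quadratic_map_def by blast

lemma fadd1: "fq q (a + b) c = fq q a c + fq q b c"
  using mq unfolding mult_quadratic_map_def fq_def Let_def by blast

lemma fadd2: "fq q a (b + c) = fq q a b + fq q a c"
  using mq unfolding mult_quadratic_map_def fq_def Let_def by blast

lemma q0: "q 0 = 0" using qint[of 0] by simp
lemma q1: "q 1 = 1" using qint[of 1] by simp
lemma q2: "q 2 = 4" using qint[of 2] by simp

lemma fsym: "fq q a b = fq q b a"
  unfolding fq_def by (simp add: add.commute)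

lemma qsum: "q (a + b) = q a + q b + fq q a b"
  unfolding fq_def by simp

lemma faa: "fq q a a = 2 * q a"
proof -
  have "q (a + a) = q 2 * q a" by (metis qmult mult_2)
  then show ?thesis unfolding fq_def q2 by simp
qed

lemma fscale: "fq q (c * a) (c * b) = q c * fq q a b"
proof -
  have "q (c*a + c*b) = q c * q (a + b)" by (metis qmult distrib_left)
  then show ?thesis unfolding fq_def by (simp add: qmult algebra_simps)
qed

lemma q4: "q (A + B + (C + D)) = q A + q B + q C + q D + fq q A B + fq q C D
   + fq q A C + fq q A D + fq q B C + fq q B D"
  by (simp add: qsum[of "A+B"] qsum[of A B] qsum[of C D] fadd1 fadd2)

lemma fprod: "fq q x y * fq q z w = fq q (x*z) (y*w) + fq q (x*w) (y*z)"
proof -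
  have e: "q ((x+y)*(z+w)) = q (x+y) * q (z+w)" by (rule qmult)
  have pe: "(x+y)*(z+w) = x*z + x*w + (y*z + y*w)" by (simp add: algebra_simps)
  have l: "q ((x+y)*(z+w)) = q (x*z) + q (x*w) + q (y*z) + q (y*w) + fq q (x*z) (x*w) + fq q (y*z) (y*w)
   + fq q (x*z) (y*z) + fq q (x*z) (y*w) + fq q (x*w) (y*z) + fq q (x*w) (y*w)"
    unfolding pe by (rule q4)
  have a1: "fq q (x*z) (x*w) = q x * fq q z w" by (rule fscale)
  have a2: "fq q (y*z) (y*w) = q y * fq q z w" by (rule fscale)
  have a3: "fq q (x*z) (y*z) = q z * fq q x y" using fscale[of z x y] by (simp add: mult.commute)
  have a4: "fq q (x*w) (y*w) = q w * fq q x y" using fscale[of w x y] by (simp add: mult.commute)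
  have b: "q (x+y) * q (z+w) = (q x + q y + fq q x y) * (q z + q w + fq q z w)" by (simp add: qsum)
  have c: "q (x*z) = q x * q z" "q (x*w) = q x * q w" "q (y*z) = q y * q z" "q (y*w) = q y * q w"
    by (simp_all add: qmult)
  have h: "q x * q z + q x * q w + q y * q z + q y * q w + q x * fq q z w + q y * fq q z w
     + q z * fq q x y + fq q (x*z) (y*w) + fq q (x*w) (y*z) + q w * fq q x y
     = (q x + q y + fq q x y) * (q z + q w + fq q z w)"
    using e l a1 a2 a3 a4 b c by simp
  then show ?thesis by (simp add: algebra_simps)
qed

abbreviation tq where "tq a \<equiv> fq q a 1"

lemma t1: "tq 1 = 2" using faa[of 1] q1 by simp

lemma tmul: "tq a * tq b = tq (a*b) + fq q a b"
  using fprod[of a 1 b 1] by (simp add: fsym)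

lemma K1: "fq q a b * (tq a * tq b - fq q a b) = q a * (tq b)^2 + q b * (tq a)^2 - 4 * q a * q b"
proof -
  have "fq q a b * (tq a * tq b - fq q a b) = fq q a b * tq (a*b)" using tmul by simp
  also have "\<dots> = fq q (a*(a*b)) b + fq q a (b*(a*b))" using fprod[of a b "a*b" 1] by simp
  also have "fq q (a*(a*b)) b = q b * tq (a*a)"
    using fscale[of b "a*a" 1] by (simp add: mult_ac)
  also have "fq q a (b*(a*b)) = q a * tq (b*b)"
  proof -
    have "fq q a (b*(a*b)) = fq q (a*(b*b)) (a*1)" by (simp add: fsym[of a] mult_ac)
    also have "\<dots> = q a * tq (b*b)" using fscale[of a "b*b" 1] .
    finally show ?thesis .
  qed
  also have "tq (a*a) = (tq a)^2 - 2 * q a" using tmul[of a a] faa[of a] by (simp add: power2_eq_square)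
  also have "tq (b*b) = (tq b)^2 - 2 * q b" using tmul[of b b] faa[of b] by (simp add: power2_eq_square)
  finally show ?thesis by (simp add: algebra_simps)
qed

lemma M1: "2 * fq q (a*b) c + tq c * fq q a b = tq a * fq q b c + tq b * fq q a c"
proof -
  have 1: "tq a * fq q b c = fq q (a*b) c + fq q (a*c) b" using fprod[of a 1 b c] by simp
  have 2: "tq b * fq q a c = fq q (a*b) c + fq q (b*c) a" using fprod[of b 1 a c] by (simp add: mult.commute)
  have 3: "fq q a b * tq c = fq q (a*c) b + fq q a (b*c)" using fprod[of a b c 1] by simp
  show ?thesis using 1 2 3 by (simp add: fsym[of a "b*c"] algebra_simps)
qed

lemma M2: "tq c * fq q (a*b) c - 2 * q c * tq (a*b) = fq q a c * fq q b c - tq a * tq b * q c"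
proof -
  have 1: "fq q (a*b) c * tq c = fq q (a*b) (c*c) + q c * tq (a*b)"
  proof -
    have "fq q (a*b) c * tq c = fq q (a*b) (c*c) + fq q ((a*b)*c) (c*1)" using fprod[of "a*b" c 1 c] by (simp add: fsym[of 1 c])
    also have "fq q ((a*b)*c) (c*1) = fq q (c*(a*b)) (c*1)" by (simp add: mult.commute)
    also have "\<dots> = q c * tq (a*b)" by (rule fscale)
    finally show ?thesis by (simp add: mult.commute)
  qed
  have 2: "fq q a c * fq q b c = fq q (a*b) (c*c) + q c * fq q a b"
    using fprod[of a c b c] fscale[of c a b] by (simp add: mult_ac)
  show ?thesis using 1 2 tmul[of a b] by (simp add: algebra_simps)
qed

end


lemma lc: "(x::'a::comm_ring_1) - y = h \<Longrightarrow> h = 0 \<Longrightarrow> x = y" by simp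

lemma quad_root: "\<exists>r::'m::alg_closed_field. r^2 - T*r + Q = 0"
proof -
  define c where "c = (\<lambda>i::nat. if i = 0 then Q else if i = 1 then -T else (1::'m))"
  have "\<exists>x. (\<Sum>k\<le>2. c k * x ^ k) = 0"
    by (rule alg_closed) (auto simp: c_def)
  then obtain x where "(\<Sum>k\<le>2. c k * x ^ k) = 0" by blast
  then have "x * x + (Q - T * x) = 0"
    by (simp add: c_def numeral_2_eq_2 atMost_Suc)
  moreover have "x^2 - T*x + Q = x * x + (Q - T * x)" by (simp add: power2_eq_square)
  ultimately show ?thesis by metis
qed

lemma quad_unique:
  fixes r s t Q :: "'m::field"
  assumes h1: "r^2 - t*r + Q = 0" and h2: "s^2 - t*s + Q = 0" and h3: "t^2 = 4*Q"
  shows "r = s"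
proof (rule ccontr)
  assume ne: "r \<noteq> s"
  have "(r - s) * (r + s - t) = (r^2 - t*r + Q) - (s^2 - t*s + Q)"
    by (simp add: algebra_simps power2_eq_square)
  with h1 h2 have "(r - s) * (r + s - t) = 0" by simp
  with ne have "r + s - t = 0" by simp
  then have "s = t - r" by (simp add: algebra_simps)
  moreover have "(r - (t - r))^2 - (t^2 - 4*Q) = 4*(r^2 - t*r + Q)"
    by (simp add: algebra_simps power2_eq_square)
  ultimately have "(r - s)^2 = 0" using h1 h3 by simp
  with ne show False by simp
qed

lemma hom_mono:
  fixes \<phi> :: "'k::field \<Rightarrow> 'm::field"
  assumes add: "\<And>a b. \<phi> (a + b) = \<phi> a + \<phi> b"
    and mul: "\<And>a b. \<phi> (a * b) = \<phi> a * \<phi> b" and one: "\<phi> 1 = 1"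
  shows "field_monomorphism \<phi>"
proof -
  have d: "\<phi> (a - b) = \<phi> a - \<phi> b" for a b using add[of "a - b" b] by (simp add: algebra_simps)
  have "inj \<phi>"
  proof (rule injI)
    fix a b assume e: "\<phi> a = \<phi> b"
    show "a = b"
    proof (rule ccontr)
      assume "a \<noteq> b"
      then have "(a - b) * inverse (a - b) = 1" by simp
      then have "\<phi> (a - b) * \<phi> (inverse (a - b)) = 1" using mul one by metis
      with d e show False by simp
    qed
  qed
  then show ?thesis using assms unfolding field_monomorphism_def by blast
qed

context
  fixes q :: "'k::field \<Rightarrow> 'm::alg_closed_field"
  assumes mq: "mult_quadratic_map q"
begin

lemma assemble:
  fixes \<phi> :: "'k \<Rightarrow> 'm"
  assumes add: "\<And>a b. \<phi> (a + b) = \<phi> a + \<phi> b"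
    and mul: "\<And>a b. \<phi> (a * b) = \<phi> a * \<phi> b" and one: "\<phi> 1 = 1"
    and root: "\<And>a. (\<phi> a)^2 - fq q a 1 * \<phi> a + q a = 0"
  shows "\<exists>\<phi>1 \<phi>2 :: 'k \<Rightarrow> 'm. field_monomorphism \<phi>1 \<and> field_monomorphism \<phi>2 \<and>
           (\<forall>a. q a = \<phi>1 a * \<phi>2 a)"
proof -
  define \<psi> where "\<psi> a = fq q a 1 - \<phi> a" for a
  have fd: "fq q a b = fq q a 1 * \<phi> b + fq q b 1 * \<phi> a - 2 * \<phi> a * \<phi> b" for a b
  proof -
    have "(\<phi> (a+b))^2 - fq q (a+b) 1 * \<phi> (a+b) + q (a+b) = 0" by (rule root)
    then have h0: "(\<phi> a + \<phi> b)^2 - (fq q a 1 + fq q b 1) * (\<phi> a + \<phi> b) + (q a + q b + fq q a b) = 0"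
      by (simp add: add fadd1[OF mq] qsum[OF mq])
    show ?thesis
    proof (rule lc)
      show "fq q a b - (fq q a 1 * \<phi> b + fq q b 1 * \<phi> a - 2 * \<phi> a * \<phi> b) =
        ((\<phi> a + \<phi> b)^2 - (fq q a 1 + fq q b 1) * (\<phi> a + \<phi> b) + (q a + q b + fq q a b))
        - ((\<phi> a)^2 - fq q a 1 * \<phi> a + q a) - ((\<phi> b)^2 - fq q b 1 * \<phi> b + q b)"
        by (simp add: algebra_simps power2_eq_square)
      show "((\<phi> a + \<phi> b)^2 - (fq q a 1 + fq q b 1) * (\<phi> a + \<phi> b) + (q a + q b + fq q a b))
        - ((\<phi> a)^2 - fq q a 1 * \<phi> a + q a) - ((\<phi> b)^2 - fq q b 1 * \<phi> b + q b) = 0"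
        using h0 root[of a] root[of b] by simp
    qed
  qed
  have padd: "\<psi> (a + b) = \<psi> a + \<psi> b" for a b
    unfolding \<psi>_def by (simp add: add fadd1[OF mq])
  have pone: "\<psi> 1 = 1" unfolding \<psi>_def using t1[OF mq] one by simp
  have pmul: "\<psi> (a * b) = \<psi> a * \<psi> b" for a b
  proof -
    have tab: "fq q (a*b) 1 = fq q a 1 * fq q b 1 - fq q a b" using tmul[OF mq, of a b] by simp
    show ?thesis unfolding \<psi>_def tab fd[of a b] mul by (simp add: algebra_simps)
  qed
  have "q a = \<phi> a * \<psi> a" for a
  proof (rule lc)
    show "q a - \<phi> a * \<psi> a = (\<phi> a)^2 - fq q a 1 * \<phi> a + q a"
      unfolding \<psi>_def by (simp add: algebra_simps power2_eq_square)
  qed (rule root)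
  then show ?thesis using hom_mono[OF add mul one] hom_mono[OF padd pmul pone] by blast
qed

lemma iA_mul: fixes tab :: "'a::comm_ring_1" shows "(tab*\<rho> - fab)*(2*\<rho> - T) - (ta*\<rho> - fa)*(tb*\<rho> - fb) = (2*tab - ta*tb)*(\<rho>^2-T*\<rho>+Q) + \<rho>*((T*tab - 2*fab) - (ta*tb*T - ta*fb - tb*fa)) + ((T*fab - 2*Q*tab) - (fa*fb - ta*tb*Q))"
  by (simp add: algebra_simps power2_eq_square)

lemma iA_root: fixes t :: "'a::comm_ring_1" shows "(t*\<rho> - f)^2 - t*(t*\<rho> - f)*(2*\<rho>-T) + qq*(2*\<rho>-T)^2 = (4*qq - t^2)*(\<rho>^2-T*\<rho>+Q) - (f*(t*T - f) - (qq*T^2 + Q*t^2 - 4*qq*Q))"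
  by (simp add: algebra_simps power2_eq_square)

lemma caseA:
  assumes th: "(fq q \<theta> 1)^2 \<noteq> 4 * q \<theta>"
  shows "\<exists>\<phi>1 \<phi>2 :: 'k \<Rightarrow> 'm. field_monomorphism \<phi>1 \<and> field_monomorphism \<phi>2 \<and>
           (\<forall>a. q a = \<phi>1 a * \<phi>2 a)"
proof -
  define T where "T = fq q \<theta> 1"
  define Q where "Q = q \<theta>"
  obtain \<rho> where rho: "\<rho>^2 - T*\<rho> + Q = 0" using quad_root by blast
  define D where "D = 2*\<rho> - T"
  have "D^2 - (T^2 - 4*Q) = 4*(\<rho>^2 - T*\<rho> + Q)"
    unfolding D_def by (simp add: algebra_simps power2_eq_square)
  then have "D^2 = T^2 - 4*Q" using rho by simp
  then have Dnz: "D \<noteq> 0" using th unfolding T_def Q_def by auto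
  define \<phi> where "\<phi> a = (fq q a 1 * \<rho> - fq q a \<theta>) / D" for a
  have add: "\<phi> (a + b) = \<phi> a + \<phi> b" for a b
    unfolding \<phi>_def fadd1[OF mq] add_divide_distrib[symmetric] by (simp add: algebra_simps)
  have one: "\<phi> 1 = 1"
    unfolding \<phi>_def using t1[OF mq] fsym[OF mq, of 1 \<theta>] Dnz by (simp add: D_def T_def)
  have root: "(\<phi> a)^2 - fq q a 1 * \<phi> a + q a = 0" for a
  proof -
    have k: "fq q a \<theta> * (fq q a 1 * T - fq q a \<theta>) = q a * T^2 + Q * (fq q a 1)^2 - 4 * q a * Q"
      using K1[OF mq, of a \<theta>] unfolding T_def Q_def .
    have E: "(fq q a 1 * \<rho> - fq q a \<theta>)^2 - fq q a 1 * (fq q a 1 * \<rho> - fq q a \<theta>) * D + q a * D^2 = 0"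
      unfolding D_def using iA_root[of "fq q a 1" \<rho> "fq q a \<theta>" T "q a" Q] k rho by simp
    have pD: "\<phi> a * D = fq q a 1 * \<rho> - fq q a \<theta>" unfolding \<phi>_def using Dnz by simp
    have "((\<phi> a)^2 - fq q a 1 * \<phi> a + q a) * D^2 = (\<phi> a * D)^2 - fq q a 1 * (\<phi> a * D) * D + q a * D^2"
      by (simp add: algebra_simps power2_eq_square)
    then have "((\<phi> a)^2 - fq q a 1 * \<phi> a + q a) * D^2 = 0" using E unfolding pD by simp
    then show ?thesis using Dnz by simp
  qed
  have mul: "\<phi> (a * b) = \<phi> a * \<phi> b" for a b
  proof -
    have m1: "2 * fq q (a*b) \<theta> + T * fq q a b = fq q a 1 * fq q b \<theta> + fq q b 1 * fq q a \<theta>"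
      using M1[OF mq, of a b \<theta>] unfolding T_def .
    have m2: "T * fq q (a*b) \<theta> - 2 * Q * fq q (a*b) 1 = fq q a \<theta> * fq q b \<theta> - fq q a 1 * fq q b 1 * Q"
      using M2[OF mq, of \<theta> a b] unfolding T_def Q_def .
    have tm: "fq q a 1 * fq q b 1 = fq q (a*b) 1 + fq q a b" using tmul[OF mq, of a b] .
    have m1': "T * fq q (a*b) 1 - 2 * fq q (a*b) \<theta> = fq q a 1 * fq q b 1 * T - fq q a 1 * fq q b \<theta> - fq q b 1 * fq q a \<theta>"
      using m1 tm by (simp add: algebra_simps)
    have X: "(fq q (a*b) 1 * \<rho> - fq q (a*b) \<theta>) * D = (fq q a 1 * \<rho> - fq q a \<theta>) * (fq q b 1 * \<rho> - fq q b \<theta>)"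
    proof (rule lc)
      show "(fq q (a*b) 1 * \<rho> - fq q (a*b) \<theta>) * D - (fq q a 1 * \<rho> - fq q a \<theta>) * (fq q b 1 * \<rho> - fq q b \<theta>) = 
         (2*fq q (a*b) 1 - fq q a 1*fq q b 1)*(\<rho>^2-T*\<rho>+Q) + \<rho>*((T*fq q (a*b) 1 - 2*fq q (a*b) \<theta>) - (fq q a 1*fq q b 1*T - fq q a 1*fq q b \<theta> - fq q b 1*fq q a \<theta>)) + ((T*fq q (a*b) \<theta> - 2*Q*fq q (a*b) 1) - (fq q a \<theta>*fq q b \<theta> - fq q a 1*fq q b 1*Q))"
        unfolding D_def by (rule iA_mul)
    qed (use rho m1' m2 in simp)
    have pD: "\<phi> c * D = fq q c 1 * \<rho> - fq q c \<theta>" for c unfolding \<phi>_def using Dnz by simp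
    have "(\<phi> (a*b) * D) * D = (\<phi> a * D) * (\<phi> b * D)" using X unfolding pD .
    then have "\<phi> (a*b) * (D * D) = (\<phi> a * \<phi> b) * (D * D)" by (simp add: mult_ac)
    then show ?thesis using Dnz by simp
  qed
  show ?thesis by (rule assemble[OF add mul one root])
qed

lemma iB_f: fixes f :: "'a::comm_ring_1" shows "(f - 2*x*y)^2 = -(f*(2*x*(2*y) - f) - (x^2*(2*y)^2 + y^2*(2*x)^2 - 4*x^2*y^2))"
  by (simp add: algebra_simps power2_eq_square)

lemma caseB:
  assumes all: "\<And>a. (fq q a 1)^2 = 4 * q a"
  shows "\<exists>\<phi>1 \<phi>2 :: 'k \<Rightarrow> 'm. field_monomorphism \<phi>1 \<and> field_monomorphism \<phi>2 \<and>
           (\<forall>a. q a = \<phi>1 a * \<phi>2 a)"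
proof -
  define \<phi> where "\<phi> a = (SOME r. r^2 - fq q a 1 * r + q a = 0)" for a
  have root: "(\<phi> a)^2 - fq q a 1 * \<phi> a + q a = 0" for a
    unfolding \<phi>_def by (rule someI_ex[OF quad_root])
  have uniq: "r^2 - fq q a 1 * r + q a = 0 \<Longrightarrow> \<phi> a = r" for a r
    using quad_unique[OF root[of a] _ all[of a]] by blast
  have two: "fq q a 1 = 2 * \<phi> a" for a
  proof -
    have "(2 * \<phi> a - fq q a 1)^2 = 4 * ((\<phi> a)^2 - fq q a 1 * \<phi> a + q a) + ((fq q a 1)^2 - 4 * q a)"
      by (simp add: algebra_simps power2_eq_square)
    then have "(2 * \<phi> a - fq q a 1)^2 = 0" using root[of a] all[of a] by simp
    then show ?thesis by simp
  qed
  have qa: "q a = (\<phi> a)^2" for a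
  proof -
    have "(\<phi> a)^2 - 2 * \<phi> a * \<phi> a + q a = 0" using root[of a] two[of a] by (simp add: mult.assoc)
    then show ?thesis by (simp add: power2_eq_square algebra_simps)
  qed
  have fab: "fq q a b = 2 * \<phi> a * \<phi> b" for a b
  proof -
    have k: "fq q a b * (fq q a 1 * fq q b 1 - fq q a b) = q a * (fq q b 1)^2 + q b * (fq q a 1)^2 - 4 * q a * q b"
      using K1[OF mq, of a b] .
    have "(fq q a b - 2 * \<phi> a * \<phi> b)^2 = 0"
      unfolding iB_f using k unfolding qa[of a] qa[of b] two[of a] two[of b] by simp
    then show ?thesis by simp
  qed
  have add: "\<phi> (a + b) = \<phi> a + \<phi> b" for a b
  proof (rule uniq)
    show "(\<phi> a + \<phi> b)^2 - fq q (a+b) 1 * (\<phi> a + \<phi> b) + q (a+b) = 0"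
      unfolding qsum[OF mq, of a b] fadd1[OF mq, of a b 1] fab[of a b] qa[of a] qa[of b] two[of a] two[of b]
      by (simp add: algebra_simps power2_eq_square)
  qed
  have mul: "\<phi> (a * b) = \<phi> a * \<phi> b" for a b
  proof (rule uniq)
    have tab: "fq q (a*b) 1 = fq q a 1 * fq q b 1 - fq q a b" using tmul[OF mq, of a b] by simp
    show "(\<phi> a * \<phi> b)^2 - fq q (a*b) 1 * (\<phi> a * \<phi> b) + q (a*b) = 0"
      unfolding tab qmult[OF mq, of a b] fab[of a b] qa[of a] qa[of b] two[of a] two[of b]
      by (simp add: algebra_simps power2_eq_square)
  qed
  have one: "\<phi> 1 = 1"
    by (rule uniq) (simp add: t1[OF mq] q1[OF mq])
  show ?thesis by (rule assemble[OF add mul one root])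
qed

lemma main_ac:
  "\<exists>\<phi>1 \<phi>2 :: 'k \<Rightarrow> 'm. field_monomorphism \<phi>1 \<and> field_monomorphism \<phi>2 \<and>
           (\<forall>a. q a = \<phi>1 a * \<phi>2 a)"
  using caseA caseB by blast

end

lemma to_ac_mqm:
  fixes q :: "'k::field \<Rightarrow> 'l::field"
  assumes "mult_quadratic_map q"
  shows "mult_quadratic_map (\<lambda>a. to_ac (q a))"
proof -
  have m: "\<forall>a b. q (a * b) = q a * q b" and i: "\<forall>n::int. q (of_int n) = of_int (n ^ 2)"
    and f1: "\<forall>a b c. q (a + b + c) - q (a + b) - q c = (q (a + c) - q a - q c) + (q (b + c) - q b - q c)"
    and f2: "\<forall>a b c. q (a + (b + c)) - q a - q (b + c) = (q (a + b) - q a - q b) + (q (a + c) - q a - q c)"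
    using assms unfolding mult_quadratic_map_def Let_def by blast+
  have "\<forall>a b c. to_ac (q (a + b + c)) - to_ac (q (a + b)) - to_ac (q c) = (to_ac (q (a + c)) - to_ac (q a) - to_ac (q c)) + (to_ac (q (b + c)) - to_ac (q b) - to_ac (q c))"
  proof (intro allI)
    fix a b c
    show "to_ac (q (a + b + c)) - to_ac (q (a + b)) - to_ac (q c) = (to_ac (q (a + c)) - to_ac (q a) - to_ac (q c)) + (to_ac (q (b + c)) - to_ac (q b) - to_ac (q c))"
      using arg_cong[OF spec[OF spec[OF spec[OF f1, of a], of b], of c], of to_ac] by (simp only: to_ac_add to_ac_diff)
  qed
  moreover have "\<forall>a b c. to_ac (q (a + (b + c))) - to_ac (q a) - to_ac (q (b + c)) = (to_ac (q (a + b)) - to_ac (q a) - to_ac (q b)) + (to_ac (q (a + c)) - to_ac (q a) - to_ac (q c))"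
  proof (intro allI)
    fix a b c
    show "to_ac (q (a + (b + c))) - to_ac (q a) - to_ac (q (b + c)) = (to_ac (q (a + b)) - to_ac (q a) - to_ac (q b)) + (to_ac (q (a + c)) - to_ac (q a) - to_ac (q c))"
      using arg_cong[OF spec[OF spec[OF spec[OF f2, of a], of b], of c], of to_ac] by (simp only: to_ac_add to_ac_diff)
  qed
  ultimately show ?thesis using m i unfolding mult_quadratic_map_def Let_def
    by (simp only: to_ac_mult to_ac_of_int) blast
qed

theorem corollary1p3:
  fixes q :: "'k::field \<Rightarrow> 'l::field"
  assumes "mult_quadratic_map q"
  shows "\<exists>\<phi>1 \<phi>2 :: 'k \<Rightarrow> 'l alg_closure.
           field_monomorphism \<phi>1 \<and> field_monomorphism \<phi>2 \<and>
           (\<forall>a. to_ac (q a) = \<phi>1 a * \<phi>2 a)"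
  by (rule main_ac[OF to_ac_mqm[OF assms]])

end
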